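(* Let $P_{XY}$ be a probability distribution on finite $\mathcal X\times\mathcal Y$ with marginals $P_X,P_Y$. Then: (1) $U(X;Y)\ge0$, with equality if and only if $P_{XY}=P_X\times P_Y$. (2) $U(X;Y)<\infty$ if and only if there exists $y\in\mathcal Y$ such that for every $x\in\mathcal X$, either $P_{Y|X}(y|x)>0$ or $P_X(x)=0$. (3) If $X-Y-Z$ is a Markov chain (with $Z$ taking values in a finite set), then $U(X;Z)\le U(X;Y)$ and $U(X;Z)\le U(Y;Z)$.
   Context: $D(P\|Q)=\sum P\log(P/Q)$ ($0\log(0/q)=0$; $+\infty$ if $P\not\ll Q$). For a joint distribution $P_{AB}$ with $A$-marginal $P_A$, the umlaut information is $U(A;B)=\min_{Q_B}D(P_A\times Q_B\|P_{AB})$ (note the asymmetry: the first argument's marginal is kept). *)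

theory Defs
  imports "HOL-Analysis.Analysis" "HOL-Library.Extended_Real"
begin

definition is_dist :: "('a::finite \<Rightarrow> real) \<Rightarrow> bool" where
  "is_dist p \<longleftrightarrow> (\<forall>a. 0 \<le> p a) \<and> (\<Sum>a\<in>UNIV. p a) = 1"

definition KL :: "('a::finite \<Rightarrow> real) \<Rightarrow> ('a \<Rightarrow> real) \<Rightarrow> ereal" where
  "KL p q = (if \<exists>a. p a > 0 \<and> q a = 0 then \<infinity>
             else ereal (\<Sum>a\<in>UNIV. if p a = 0 then 0 else p a * ln (p a / q a)))"

definition marg1 :: "('a::finite \<times> 'b::finite \<Rightarrow> real) \<Rightarrow> 'a \<Rightarrow> real" where
  "marg1 P a = (\<Sum>b\<in>UNIV. P (a, b))"

definition marg2 :: "('a::finite \<times> 'b::finite \<Rightarrow> real) \<Rightarrow> 'b \<Rightarrow> real" where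
  "marg2 P b = (\<Sum>a\<in>UNIV. P (a, b))"

definition umlaut :: "('a::finite \<times> 'b::finite \<Rightarrow> real) \<Rightarrow> ereal" where
  "umlaut P = (INF Q \<in> {Q. is_dist Q}. KL (\<lambda>(a, b). marg1 P a * Q b) P)"

definition margXY :: "('x::finite \<times> 'y::finite \<times> 'z::finite \<Rightarrow> real) \<Rightarrow> 'x \<times> 'y \<Rightarrow> real" where
  "margXY P = (\<lambda>(x, y). \<Sum>z\<in>UNIV. P (x, y, z))"
definition margXZ :: "('x::finite \<times> 'y::finite \<times> 'z::finite \<Rightarrow> real) \<Rightarrow> 'x \<times> 'z \<Rightarrow> real" where
  "margXZ P = (\<lambda>(x, z). \<Sum>y\<in>UNIV. P (x, y, z))"
definition margYZ :: "('x::finite \<times> 'y::finite \<times> 'z::finite \<Rightarrow> real) \<Rightarrow> 'y \<times> 'z \<Rightarrow> real" where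
  "margYZ P = (\<lambda>(y, z). \<Sum>x\<in>UNIV. P (x, y, z))"

definition markov_chain :: "('x::finite \<times> 'y::finite \<times> 'z::finite \<Rightarrow> real) \<Rightarrow> bool" where
  "markov_chain P \<longleftrightarrow> (\<forall>x y z. P (x, y, z) * marg1 (margYZ P) y = margXY P (x, y) * margYZ P (y, z))"

end

theory Submission
  imports Defs
begin


definition ff :: "real \<Rightarrow> real \<Rightarrow> real" where
  "ff x y = (if x = 0 then 0 else x * ln (x / y))"

lemma sum_UNIV_prod: "(\<Sum>p\<in>(UNIV::('a::finite\<times>'b::finite) set). g p) = (\<Sum>a\<in>UNIV. \<Sum>b\<in>UNIV. g (a,b))"
  by (subst sum.cartesian_product) simp

lemma ff_term:
  assumes "a \<ge> 0" "b \<ge> 0" "a > 0 \<Longrightarrow> b > 0" "A > 0" "B > 0"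
  shows "ff a b \<ge> a * ln (A/B) + a - b * A / B"
proof (cases "a = 0")
  case True thus ?thesis using assms by (simp add: ff_def)
next
  case False
  hence a: "a > 0" using assms by simp
  hence b: "b > 0" using assms by simp
  have x: "ln (b*A/(a*B)) \<le> b*A/(a*B) - 1" using a b assms by (intro ln_le_minus_one) simp
  have e: "ln (b*A/(a*B)) = ln b + ln A - ln a - ln B" using a b assms
    by (simp add: ln_div ln_mult)
  have "ff a b = a * (ln a - ln b)" using a b False by (simp add: ff_def ln_div)
  moreover have "a * ln (A/B) = a * (ln A - ln B)" using assms by (simp add: ln_div)
  moreover have "a * (b*A/(a*B)) = b * A / B" using a by simp
  moreover have "a * ln (b*A/(a*B)) \<le> a * (b*A/(a*B) - 1)" using x a by (simp add: mult_left_mono)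
  ultimately have i1: "ff a b = a*ln a - a*ln b" "a * ln (A/B) = a*ln A - a*ln B"
     "a * ln (b*A/(a*B)) \<le> b*A/B - a" by (simp_all add: algebra_simps)
  have "a * ln (b*A/(a*B)) = a*ln b + a*ln A - a*ln a - a*ln B" unfolding e by (simp add: algebra_simps)
  thus ?thesis using i1 by linarith
qed

lemma log_sum:
  assumes "finite S" "\<And>i. i\<in>S \<Longrightarrow> a i \<ge> 0" "\<And>i. i\<in>S \<Longrightarrow> b i \<ge> 0"
    "\<And>i. i\<in>S \<Longrightarrow> a i > 0 \<Longrightarrow> b i > 0"
  shows "(\<Sum>i\<in>S. ff (a i) (b i)) \<ge> ff (\<Sum>i\<in>S. a i) (\<Sum>i\<in>S. b i)"
proof (cases "(\<Sum>i\<in>S. a i) = 0")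
  case True
  hence "\<forall>i\<in>S. a i = 0" using assms sum_nonneg_eq_0_iff by blast
  thus ?thesis by (simp add: ff_def)
next
  case False
  define A where "A = (\<Sum>i\<in>S. a i)"
  define B where "B = (\<Sum>i\<in>S. b i)"
  have A: "A > 0" using False assms(2) A_def by (simp add: order_less_le sum_nonneg)
  have "\<exists>j\<in>S. a j > 0"
  proof (rule ccontr)
    assume "\<not> ?thesis"
    hence "\<forall>i\<in>S. a i \<le> 0" by auto
    hence "A \<le> 0" unfolding A_def by (intro sum_nonpos) auto
    thus False using A by simp
  qed
  then obtain j where j: "j \<in> S" "a j > 0" by blast
  have B: "B > 0"
  proof -
    have "b j \<le> B" unfolding B_def using assms j by (intro member_le_sum) auto
    thus ?thesis using assms(4) j by (meson less_le_trans)
  qed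
  have "(\<Sum>i\<in>S. ff (a i) (b i)) \<ge> (\<Sum>i\<in>S. a i * ln (A/B) + a i - b i * A / B)"
    using assms A B by (intro sum_mono ff_term) auto
  also have "(\<Sum>i\<in>S. a i * ln (A/B) + a i - b i * A / B) = A * ln (A/B) + A - B * A / B"
    by (simp add: sum.distrib sum_subtractf A_def B_def sum_distrib_right sum_divide_distrib)
  also have "\<dots> = ff A B" using A B by (simp add: ff_def)
  finally show ?thesis by (simp add: A_def B_def)
qed

lemma KL_fin: "\<not>(\<exists>a. p a > 0 \<and> q a = 0) \<Longrightarrow> KL p q = ereal (\<Sum>a\<in>UNIV. ff (p a) (q a))"
  by (simp add: KL_def ff_def)

lemma KL_nonneg:
  assumes "is_dist p" "is_dist q"
  shows "KL p q \<ge> 0"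
proof (cases "\<exists>a. p a > 0 \<and> q a = 0")
  case True thus ?thesis by (simp add: KL_def)
next
  case False
  have "(\<Sum>a\<in>UNIV. ff (p a) (q a)) \<ge> ff (\<Sum>a\<in>UNIV. p a) (\<Sum>a\<in>UNIV. q a)"
    using assms False unfolding is_dist_def by (intro log_sum) (auto simp: order_less_le)
  thus ?thesis using assms False by (simp add: KL_fin is_dist_def ff_def)
qed

lemma KL_zero:
  assumes "is_dist p" "is_dist q" "KL p q = 0"
  shows "p = q"
proof -
  have F: "\<not>(\<exists>a. p a > 0 \<and> q a = 0)" using assms(3) by (auto simp: KL_def split: if_splits)
  hence s: "(\<Sum>a\<in>UNIV. ff (p a) (q a)) = 0" using assms(3) by (simp add: KL_fin zero_ereal_def)
  define d where "d a = ff (p a) (q a) - (p a - q a)" for a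
  have d0: "d a \<ge> 0" for a
  proof (cases "p a = 0")
    case True thus ?thesis using assms(2) by (simp add: d_def ff_def is_dist_def)
  next
    case False
    hence pa: "p a > 0" using assms(1) by (simp add: is_dist_def order_less_le)
    hence qa: "q a > 0" using F assms(2) by (simp add: is_dist_def order_less_le) (metis order_less_le)
    have "ln (q a / p a) \<le> q a / p a - 1" using pa qa by (intro ln_le_minus_one) simp
    hence "p a * ln (q a / p a) \<le> p a * (q a / p a - 1)" using pa by (simp add: mult_left_mono)
    moreover have "ln (p a / q a) = - ln (q a / p a)" using pa qa by (simp add: ln_div)
    ultimately show ?thesis using pa False by (simp add: d_def ff_def algebra_simps)
  qed
  have "(\<Sum>a\<in>UNIV. d a) = 0" using s assms(1,2)
    by (simp add: d_def sum_subtractf is_dist_def)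
  hence dz: "d a = 0" for a using d0 sum_nonneg_eq_0_iff[of UNIV d] by simp
  show ?thesis
  proof
    fix a
    show "p a = q a"
    proof (cases "p a = 0")
      case True thus ?thesis using dz[of a] by (simp add: d_def ff_def)
    next
      case False
      hence pa: "p a > 0" using assms(1) by (simp add: is_dist_def order_less_le)
      hence qa: "q a > 0" using F assms(2) by (simp add: is_dist_def order_less_le) (metis order_less_le)
      have "p a * ln (p a / q a) = p a - q a" using dz[of a] False by (simp add: d_def ff_def)
      moreover have "ln (p a / q a) = - ln (q a / p a)" using pa qa by (simp add: ln_div)
      ultimately have "ln (q a / p a) = q a / p a - 1" using pa by (simp add: field_simps)
      hence "q a / p a = 1" using pa qa by (intro ln_eq_minus_one) auto
      thus ?thesis using pa by simp
    qed
  qed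
qed



lemma ff_scale: "k \<ge> 0 \<Longrightarrow> ff (x*k) (y*k) = k * ff x y"
  by (cases "k = 0") (auto simp: ff_def)

lemma sum_pos_ex: "finite S \<Longrightarrow> sum f S > (0::real) \<Longrightarrow> \<exists>i\<in>S. f i > 0"
  by (metis not_less sum_nonpos)

lemma dpi:
  fixes p q :: "'a::finite \<Rightarrow> real" and K :: "'a \<Rightarrow> 'b::finite \<Rightarrow> real"
  assumes p0: "\<forall>a. p a \<ge> 0" and q0: "\<forall>a. q a \<ge> 0" and K0: "\<forall>a b. K a b \<ge> 0"
    and K1: "\<forall>a. (\<Sum>b\<in>UNIV. K a b) = 1"
  shows "KL (\<lambda>b. \<Sum>a\<in>UNIV. p a * K a b) (\<lambda>b. \<Sum>a\<in>UNIV. q a * K a b) \<le> KL p q"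
proof (cases "\<exists>a. p a > 0 \<and> q a = 0")
  case True thus ?thesis by (simp add: KL_def)
next
  case False
  have F': "\<not>(\<exists>b. (\<Sum>a\<in>UNIV. p a * K a b) > 0 \<and> (\<Sum>a\<in>UNIV. q a * K a b) = 0)"
  proof
    assume "\<exists>b. (\<Sum>a\<in>UNIV. p a * K a b) > 0 \<and> (\<Sum>a\<in>UNIV. q a * K a b) = 0"
    then obtain b where b: "(\<Sum>a\<in>UNIV. p a * K a b) > 0" "(\<Sum>a\<in>UNIV. q a * K a b) = 0" by blast
    obtain a where a: "p a * K a b > 0" using sum_pos_ex[OF _ b(1)] by auto
    have "p a > 0" "K a b > 0" using a p0 K0 by (metis zero_less_mult_iff not_less order_antisym)+
    hence "q a > 0" using False q0 by (metis order_less_le)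
    hence "q a * K a b > 0" using \<open>K a b > 0\<close> by simp
    moreover have "q a * K a b \<le> (\<Sum>a\<in>UNIV. q a * K a b)"
      using q0 K0 by (intro member_le_sum) auto
    ultimately show False using b(2) by simp
  qed
  have "(\<Sum>b\<in>UNIV. ff (\<Sum>a\<in>UNIV. p a * K a b) (\<Sum>a\<in>UNIV. q a * K a b))
      \<le> (\<Sum>b\<in>UNIV. \<Sum>a\<in>UNIV. ff (p a * K a b) (q a * K a b))"
  proof (intro sum_mono log_sum)
    fix a b
    show "p a * K a b \<ge> 0" "q a * K a b \<ge> 0" using p0 q0 K0 by auto
    assume "p a * K a b > 0"
    hence "p a > 0" "K a b > 0" using p0 K0 by (metis zero_less_mult_iff not_less order_antisym)+
    hence "q a > 0" using False q0 by (metis order_less_le)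
    thus "q a * K a b > 0" using \<open>K a b > 0\<close> by simp
  qed simp
  also have "\<dots> = (\<Sum>a\<in>UNIV. \<Sum>b\<in>UNIV. K a b * ff (p a) (q a))"
    using K0 by (subst sum.swap) (simp add: ff_scale)
  also have "\<dots> = (\<Sum>a\<in>UNIV. ff (p a) (q a))"
    using K1 by (simp add: sum_distrib_right[symmetric])
  finally show ?thesis using False F' by (simp add: KL_fin)
qed

lemma umlaut_le:
  fixes P1 :: "'a::finite \<times> 'b::finite \<Rightarrow> real" and P2 :: "'c::finite \<times> 'd::finite \<Rightarrow> real"
  assumes "\<And>Q. is_dist Q \<Longrightarrow> \<exists>Q'. is_dist Q' \<and>
     KL (\<lambda>(a, b). marg1 P2 a * Q' b) P2 \<le> KL (\<lambda>(a, b). marg1 P1 a * Q b) P1"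
  shows "umlaut P2 \<le> umlaut P1"
  unfolding umlaut_def
proof (rule INF_greatest)
  fix Q :: "'b \<Rightarrow> real" assume "Q \<in> {Q. is_dist Q}"
  then obtain Q' where "is_dist Q'" "KL (\<lambda>(a, b). marg1 P2 a * Q' b) P2 \<le> KL (\<lambda>(a, b). marg1 P1 a * Q b) P1"
    using assms by blast
  thus "(INF Q\<in>{Q. is_dist Q}. KL (\<lambda>(a, b). marg1 P2 a * Q b) P2) \<le> KL (\<lambda>(a, b). marg1 P1 a * Q b) P1"
    by (meson INF_lower2 mem_Collect_eq)
qed



lemma delta_outer: fixes x :: "'a::finite" and g :: "'a \<Rightarrow> 'b::finite \<Rightarrow> real" shows "(\<Sum>x'\<in>UNIV. \<Sum>y\<in>UNIV. g x' y * (if x' = x then h y else 0)) = (\<Sum>y\<in>UNIV. g x y * (h y::real))"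
proof -
  have "\<And>x'. (\<Sum>y\<in>UNIV. g x' y * (if x' = x then h y else 0)) = (if x' = x then \<Sum>y\<in>UNIV. g x' y * h y else 0)"
    by auto
  thus ?thesis by (simp del: sum.delta) (subst sum.delta, auto)
qed

lemma delta_inner: fixes z :: "'a::finite" and g :: "'b::finite \<Rightarrow> 'a \<Rightarrow> real" shows "(\<Sum>y\<in>UNIV. \<Sum>z'\<in>UNIV. g y z' * (if z' = z then h y else 0)) = (\<Sum>y\<in>UNIV. g y z * (h y::real))"
proof -
  have "\<And>y. (\<Sum>z'\<in>UNIV. g y z' * (if z' = z then h y else 0)) = g y z * h y"
    by (simp add: if_distrib[of "\<lambda>t. _ * t"] cong: if_cong)
  thus ?thesis by simp
qed

context
  fixes R :: "'x::finite \<times> 'y::finite \<times> 'z::finite \<Rightarrow> real"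
  assumes dR: "is_dist R" and mR: "markov_chain R"
begin

lemma R0: "R t \<ge> 0" using dR unfolding is_dist_def by (metis prod_cases3)

lemma mXY0: "margXY R t \<ge> 0" by (cases t) (simp add: margXY_def sum_nonneg R0)
lemma mYZ0: "margYZ R t \<ge> 0" by (cases t) (simp add: margYZ_def sum_nonneg R0)
lemma mXZ0: "margXZ R t \<ge> 0" by (cases t) (simp add: margXZ_def sum_nonneg R0)

lemma RY_zero:
  assumes "marg1 (margYZ R) y = 0"
  shows "R (x,y,z) = 0" "margXY R (x,y) = 0" "margYZ R (y,z) = 0"
proof -
  have a: "(\<Sum>z\<in>UNIV. \<Sum>x\<in>UNIV. R (x,y,z)) = 0" using assms by (simp add: marg1_def margYZ_def)
  have "\<forall>z. (\<Sum>x\<in>UNIV. R (x,y,z)) = 0" using a sum_nonneg_eq_0_iff[of UNIV "\<lambda>z. \<Sum>x\<in>UNIV. R (x,y,z)"]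
    by (simp add: sum_nonneg R0)
  have b: "\<forall>z x. R (x,y,z) = 0"
  proof (intro allI)
    fix z x
    have "(\<Sum>x\<in>UNIV. R (x,y,z)) = 0" using \<open>\<forall>z. _\<close> by blast
    thus "R (x,y,z) = 0" by (subst (asm) sum_nonneg_eq_0_iff) (auto simp: R0)
  qed
  thus "R (x,y,z) = 0" by simp
  show "margXY R (x,y) = 0" using b by (simp add: margXY_def)
  show "margYZ R (y,z) = 0" using b by (simp add: margYZ_def)
qed

lemma RY_XY: "marg1 (margYZ R) y = (\<Sum>x\<in>UNIV. margXY R (x,y))"
  by (simp add: marg1_def margYZ_def margXY_def) (rule sum.swap)

lemma m1_XY_XZ: "marg1 (margXY R) x = marg1 (margXZ R) x"
  by (simp add: marg1_def margXZ_def margXY_def) (rule sum.swap)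

lemma mk1: "margXY R (x,y) * (if marg1 (margYZ R) y = 0 then c else margYZ R (y,z) / marg1 (margYZ R) y) = R (x,y,z)"
proof (cases "marg1 (margYZ R) y = 0")
  case True thus ?thesis using RY_zero by simp
next
  case False
  have "R (x, y, z) * marg1 (margYZ R) y = margXY R (x, y) * margYZ R (y, z)"
    using mR by (simp add: markov_chain_def)
  thus ?thesis using False by (simp add: field_simps)
qed

lemma mk2: "margYZ R (y,z) * (if marg1 (margYZ R) y = 0 then c else margXY R (x,y) / marg1 (margYZ R) y) = R (x,y,z)"
  using mk1[of x y c z] by (cases "marg1 (margYZ R) y = 0") (auto simp: RY_zero mult.commute)

end



context
  fixes R :: "'x::finite \<times> 'y::finite \<times> 'z::finite \<Rightarrow> real"
  assumes dR: "is_dist R" and mR: "markov_chain R"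
begin

lemma part3a: "umlaut (margXZ R) \<le> umlaut (margXY R)"
proof (rule umlaut_le)
  fix Q :: "'y \<Rightarrow> real" assume dQ: "is_dist Q"
  define RY where "RY = marg1 (margYZ R)"
  define k where "k y z = (if RY y = 0 then (if z = undefined then 1 else 0) else margYZ R (y,z) / RY y)" for y z
  define Q' where "Q' z = (\<Sum>y\<in>UNIV. Q y * k y z)" for z
  have k0: "k y z \<ge> 0" for y z
    unfolding k_def RY_def using mYZ0[OF dR mR] by (simp add: marg1_def sum_nonneg)
  have k1: "(\<Sum>z\<in>UNIV. k y z) = 1" for y
  proof (cases "RY y = 0")
    case True thus ?thesis by (simp add: k_def)
  next
    case False thus ?thesis by (simp add: k_def sum_divide_distrib[symmetric] RY_def marg1_def)
  qed
  have dQ': "is_dist Q'"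
    unfolding is_dist_def Q'_def
  proof
    show "\<forall>z. 0 \<le> (\<Sum>y\<in>UNIV. Q y * k y z)" using dQ k0 by (auto simp: is_dist_def intro!: sum_nonneg)
    have "(\<Sum>z\<in>UNIV. \<Sum>y\<in>UNIV. Q y * k y z) = (\<Sum>y\<in>UNIV. Q y * (\<Sum>z\<in>UNIV. k y z))"
      by (subst sum.swap) (simp add: sum_distrib_left)
    thus "(\<Sum>z\<in>UNIV. \<Sum>y\<in>UNIV. Q y * k y z) = 1" using dQ k1 by (simp add: is_dist_def)
  qed
  define K where "K = (\<lambda>(x'::'x,y::'y) (x::'x,z::'z). if x' = x then k y z else 0)"
  have "KL (\<lambda>b. \<Sum>a\<in>UNIV. (\<lambda>(a,b). marg1 (margXY R) a * Q b) a * K a b)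
           (\<lambda>b. \<Sum>a\<in>UNIV. margXY R a * K a b)
        \<le> KL (\<lambda>(a,b). marg1 (margXY R) a * Q b) (margXY R)"
  proof (rule dpi)
    show "\<forall>a. 0 \<le> (case a of (a, b) \<Rightarrow> marg1 (margXY R) a * Q b)"
    proof (intro allI, clarify)
      fix a b
      have "marg1 (margXY R) a \<ge> 0" unfolding marg1_def by (rule sum_nonneg) (rule mXY0[OF dR mR])
      moreover have "Q b \<ge> 0" using dQ by (simp add: is_dist_def)
      ultimately show "0 \<le> marg1 (margXY R) a * Q b" by simp
    qed
    show "\<forall>a. 0 \<le> margXY R a" using mXY0[OF dR mR] by auto
    show "\<forall>a b. 0 \<le> K a b" using k0 by (auto simp: K_def)
    show "\<forall>a. (\<Sum>b\<in>UNIV. K a b) = 1"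
    proof
      fix a :: "'x \<times> 'y" obtain x' y where a: "a = (x',y)" by (cases a)
      have "(\<Sum>b\<in>UNIV. K a b) = (\<Sum>x\<in>UNIV. \<Sum>z\<in>UNIV. if x' = x then k y z else 0)"
        by (simp add: sum_UNIV_prod K_def a)
      also have "\<dots> = (\<Sum>x\<in>UNIV. if x' = x then (\<Sum>z\<in>UNIV. k y z) else 0)"
        by (rule sum.cong) auto
      also have "\<dots> = (\<Sum>z\<in>UNIV. k y z)" by (subst sum.delta') auto
      finally show "(\<Sum>b\<in>UNIV. K a b) = 1" using k1 by simp
    qed
  qed
  moreover have "(\<lambda>b. \<Sum>a\<in>UNIV. (\<lambda>(a,b). marg1 (margXY R) a * Q b) a * K a b)
     = (\<lambda>(a,b). marg1 (margXZ R) a * Q' b)"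
  proof (rule ext, clarify)
    fix x z
    have "(\<Sum>a\<in>UNIV. (\<lambda>(a,b). marg1 (margXY R) a * Q b) a * K a (x,z))
       = (\<Sum>x'\<in>UNIV. \<Sum>y\<in>UNIV. (marg1 (margXY R) x' * Q y) * (if x' = x then k y z else 0))"
      by (simp add: sum_UNIV_prod K_def)
    also have "\<dots> = (\<Sum>y\<in>UNIV. (marg1 (margXY R) x * Q y) * k y z)" by (rule delta_outer)
    also have "\<dots> = marg1 (margXZ R) x * Q' z"
      by (simp add: Q'_def sum_distrib_left m1_XY_XZ[OF dR mR] mult.assoc)
    finally show "(\<Sum>a\<in>UNIV. (\<lambda>(a,b). marg1 (margXY R) a * Q b) a * K a (x,z)) = marg1 (margXZ R) x * Q' z" .
  qed
  moreover have "(\<lambda>b. \<Sum>a\<in>UNIV. margXY R a * K a b) = margXZ R"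
  proof (rule ext, clarify)
    fix x z
    have "(\<Sum>a\<in>UNIV. margXY R a * K a (x,z))
       = (\<Sum>x'\<in>UNIV. \<Sum>y\<in>UNIV. margXY R (x',y) * (if x' = x then k y z else 0))"
      by (simp add: sum_UNIV_prod K_def)
    also have "\<dots> = (\<Sum>y\<in>UNIV. margXY R (x,y) * k y z)" by (rule delta_outer)
    also have "\<dots> = (\<Sum>y\<in>UNIV. R (x,y,z))"
      unfolding k_def RY_def by (simp add: mk1[OF dR mR])
    finally show "(\<Sum>a\<in>UNIV. margXY R a * K a (x,z)) = margXZ R (x,z)" by (simp add: margXZ_def)
  qed
  ultimately show "\<exists>Q'. is_dist Q' \<and>
     KL (\<lambda>(a, b). marg1 (margXZ R) a * Q' b) (margXZ R) \<le> KL (\<lambda>(a, b). marg1 (margXY R) a * Q b) (margXY R)"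
    using dQ' by auto
qed

lemma part3b: "umlaut (margXZ R) \<le> umlaut (margYZ R)"
proof (rule umlaut_le)
  fix Q :: "'z \<Rightarrow> real" assume dQ: "is_dist Q"
  define RY where "RY = marg1 (margYZ R)"
  define k where "k y x = (if RY y = 0 then (if x = undefined then 1 else 0) else margXY R (x,y) / RY y)" for y x
  have k0: "k y x \<ge> 0" for y x
    unfolding k_def RY_def using mYZ0[OF dR mR] mXY0[OF dR mR] by (simp add: marg1_def sum_nonneg)
  have k1: "(\<Sum>x\<in>UNIV. k y x) = 1" for y
  proof (cases "RY y = 0")
    case True thus ?thesis by (simp add: k_def)
  next
    case False thus ?thesis by (simp add: k_def sum_divide_distrib[symmetric] RY_def RY_XY[OF dR mR])
  qed
  have RYk: "RY y * k y x = margXY R (x,y)" for x y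
  proof (cases "RY y = 0")
    case True thus ?thesis using RY_zero[OF dR mR] by (simp add: k_def RY_def)
  next
    case False thus ?thesis by (simp add: k_def)
  qed
  define K where "K = (\<lambda>(y::'y,z'::'z) (x::'x,z::'z). if z' = z then k y x else 0)"
  have "KL (\<lambda>b. \<Sum>a\<in>UNIV. (\<lambda>(a,b). marg1 (margYZ R) a * Q b) a * K a b)
           (\<lambda>b. \<Sum>a\<in>UNIV. margYZ R a * K a b)
        \<le> KL (\<lambda>(a,b). marg1 (margYZ R) a * Q b) (margYZ R)"
  proof (rule dpi)
    show "\<forall>a. 0 \<le> (case a of (a, b) \<Rightarrow> marg1 (margYZ R) a * Q b)"
    proof (intro allI, clarify)
      fix a b
      have "marg1 (margYZ R) a \<ge> 0" unfolding marg1_def by (rule sum_nonneg) (rule mYZ0[OF dR mR])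
      moreover have "Q b \<ge> 0" using dQ by (simp add: is_dist_def)
      ultimately show "0 \<le> marg1 (margYZ R) a * Q b" by simp
    qed
    show "\<forall>a. 0 \<le> margYZ R a" using mYZ0[OF dR mR] by auto
    show "\<forall>a b. 0 \<le> K a b" using k0 by (auto simp: K_def)
    show "\<forall>a. (\<Sum>b\<in>UNIV. K a b) = 1"
    proof
      fix a :: "'y \<times> 'z" obtain y z' where a: "a = (y,z')" by (cases a)
      have "(\<Sum>b\<in>UNIV. K a b) = (\<Sum>x\<in>UNIV. \<Sum>z\<in>UNIV. if z' = z then k y x else 0)"
        by (simp add: sum_UNIV_prod K_def a)
      also have "\<dots> = (\<Sum>x\<in>UNIV. k y x)"
        by (rule sum.cong) (simp, subst sum.delta', auto)
      finally show "(\<Sum>b\<in>UNIV. K a b) = 1" using k1 by simp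
    qed
  qed
  moreover have "(\<lambda>b. \<Sum>a\<in>UNIV. (\<lambda>(a,b). marg1 (margYZ R) a * Q b) a * K a b)
     = (\<lambda>(a,b). marg1 (margXZ R) a * Q b)"
  proof (rule ext, clarify)
    fix x z
    have "(\<Sum>a\<in>UNIV. (\<lambda>(a,b). marg1 (margYZ R) a * Q b) a * K a (x,z))
       = (\<Sum>y\<in>UNIV. \<Sum>z'\<in>UNIV. (marg1 (margYZ R) y * Q z') * (if z' = z then k y x else 0))"
      by (simp add: sum_UNIV_prod K_def)
    also have "\<dots> = (\<Sum>y\<in>UNIV. (marg1 (margYZ R) y * Q z) * k y x)" by (rule delta_inner)
    also have "\<dots> = (\<Sum>y\<in>UNIV. margXY R (x,y) * Q z)"
      using RYk by (simp add: RY_def mult.commute mult.left_commute)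
    also have "\<dots> = marg1 (margXY R) x * Q z"
      by (simp add: sum_distrib_right marg1_def)
    also have "\<dots> = marg1 (margXZ R) x * Q z" by (simp add: m1_XY_XZ[OF dR mR])
    finally show "(\<Sum>a\<in>UNIV. (\<lambda>(a,b). marg1 (margYZ R) a * Q b) a * K a (x,z)) = marg1 (margXZ R) x * Q z" .
  qed
  moreover have "(\<lambda>b. \<Sum>a\<in>UNIV. margYZ R a * K a b) = margXZ R"
  proof (rule ext, clarify)
    fix x z
    have "(\<Sum>a\<in>UNIV. margYZ R a * K a (x,z))
       = (\<Sum>y\<in>UNIV. \<Sum>z'\<in>UNIV. margYZ R (y,z') * (if z' = z then k y x else 0))"
      by (simp add: sum_UNIV_prod K_def)
    also have "\<dots> = (\<Sum>y\<in>UNIV. margYZ R (y,z) * k y x)" by (rule delta_inner)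
    also have "\<dots> = (\<Sum>y\<in>UNIV. R (x,y,z))"
      unfolding k_def RY_def by (simp add: mk2[OF dR mR])
    finally show "(\<Sum>a\<in>UNIV. margYZ R a * K a (x,z)) = margXZ R (x,z)" by (simp add: margXZ_def)
  qed
  ultimately show "\<exists>Q'. is_dist Q' \<and>
     KL (\<lambda>(a, b). marg1 (margXZ R) a * Q' b) (margXZ R) \<le> KL (\<lambda>(a, b). marg1 (margYZ R) a * Q b) (margYZ R)"
    using dQ by auto
qed

end


context
  fixes P :: "'x::finite \<times> 'y::finite \<Rightarrow> real"
  assumes dP: "is_dist P"
begin

lemma P0: "P t \<ge> 0" using dP unfolding is_dist_def by (metis prod.exhaust)
lemma PX0: "marg1 P x \<ge> 0" unfolding marg1_def by (rule sum_nonneg) (rule P0)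
lemma sumPX: "(\<Sum>x\<in>UNIV. marg1 P x) = 1"
  using dP by (simp add: is_dist_def marg1_def sum_UNIV_prod)
lemma P_le_PX: "P (x,y) \<le> marg1 P x"
  unfolding marg1_def by (rule member_le_sum) (auto simp: P0)
lemma PX_zero: "marg1 P x = 0 \<Longrightarrow> P (x,y) = 0"
  using P_le_PX[of x y] P0[of "(x,y)"] by simp

lemma prod_dist: "is_dist Q \<Longrightarrow> is_dist (\<lambda>(a,b). marg1 P a * Q b)"
proof -
  assume dQ: "is_dist Q"
  have "(\<Sum>t\<in>UNIV. (\<lambda>(a,b). marg1 P a * Q b) t) = (\<Sum>a\<in>UNIV. \<Sum>b\<in>UNIV. marg1 P a * Q b)"
    by (simp add: sum_UNIV_prod)
  also have "\<dots> = (\<Sum>a\<in>UNIV. marg1 P a * (\<Sum>b\<in>UNIV. Q b))"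
    by (simp only: sum_distrib_left)
  also have "\<dots> = 1" using dQ sumPX by (simp add: is_dist_def)
  finally show ?thesis using dQ PX0 unfolding is_dist_def by auto
qed

definition G where "G = {y. \<forall>x. marg1 P x > 0 \<longrightarrow> P (x,y) > 0}"
definition S where "S y = (\<Sum>x\<in>UNIV. if marg1 P x = 0 then 0 else marg1 P x * ln (P (x,y) / marg1 P x))"
definition e where "e y = (if y \<in> G then exp (S y) else 0)"

lemma e0: "e y \<ge> 0" by (simp add: e_def)

lemma KL_inf:
  assumes "Q y > 0" "y \<notin> G"
  shows "KL (\<lambda>(a,b). marg1 P a * Q b) P = \<infinity>"
proof -
  obtain x where x: "marg1 P x > 0" "\<not> P (x,y) > 0" using assms(2) by (auto simp: G_def)
  hence "P (x,y) = 0" using P0[of "(x,y)"] by simp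
  moreover have "marg1 P x * Q y > 0" using x assms by simp
  ultimately show ?thesis unfolding KL_def by (metis (no_types, lifting) case_prod_conv)
qed

lemma KL_eq:
  assumes dQ: "is_dist Q" and g: "\<forall>y. Q y > 0 \<longrightarrow> y \<in> G"
  shows "KL (\<lambda>(a,b). marg1 P a * Q b) P = ereal (\<Sum>y\<in>UNIV. ff (Q y) (e y))"
proof -
  have Q0: "Q y \<ge> 0" for y using dQ by (simp add: is_dist_def)
  have nc: "\<not> (\<exists>t. (\<lambda>(a,b). marg1 P a * Q b) t > 0 \<and> P t = 0)"
  proof
    assume "\<exists>t. (\<lambda>(a,b). marg1 P a * Q b) t > 0 \<and> P t = 0"
    then obtain a b where ab: "marg1 P a * Q b > 0" "P (a,b) = 0" by auto
    have pa: "marg1 P a > 0" "Q b > 0" using ab PX0[of a] Q0[of b]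
      by (metis zero_less_mult_iff not_less order_antisym)+
    have "b \<in> G" using g pa(2) by blast
    hence "P (a,b) > 0" using pa(1) unfolding G_def by blast
    thus False using ab(2) by simp
  qed
  have per: "(\<Sum>a\<in>UNIV. ff (marg1 P a * Q b) (P (a,b))) = ff (Q b) (e b)" for b
  proof (cases "Q b = 0")
    case True thus ?thesis by (simp add: ff_def)
  next
    case False
    hence Qb: "Q b > 0" using Q0[of b] by simp
    hence bG: "b \<in> G" using g by auto
    have "ff (marg1 P a * Q b) (P (a,b))
        = Q b * ln (Q b) * marg1 P a - Q b * (if marg1 P a = 0 then 0 else marg1 P a * ln (P (a,b) / marg1 P a))" for a
    proof (cases "marg1 P a = 0")
      case True thus ?thesis by (simp add: ff_def)
    next
      case False
      hence pa: "marg1 P a > 0" using PX0[of a] by simp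
      hence pab: "P (a,b) > 0" using bG by (auto simp: G_def)
      have L: "ln (marg1 P a * Q b / P (a,b)) = ln (Q b) - ln (P (a,b) / marg1 P a)"
        using pa pab Qb by (simp add: ln_div ln_mult)
      have f1: "ff (marg1 P a * Q b) (P (a,b)) = marg1 P a * Q b * ln (marg1 P a * Q b / P (a,b))"
        using pa Qb by (simp add: ff_def)
      show ?thesis using False unfolding f1 L by (simp add: algebra_simps)
    qed
    hence "(\<Sum>a\<in>UNIV. ff (marg1 P a * Q b) (P (a,b))) = Q b * ln (Q b) * (\<Sum>a\<in>UNIV. marg1 P a) - Q b * S b"
      by (simp add: sum_subtractf sum_distrib_left S_def)
    also have "\<dots> = Q b * (ln (Q b) - S b)" by (simp add: sumPX algebra_simps)
    also have "\<dots> = ff (Q b) (e b)" using bG Qb by (simp add: ff_def e_def ln_div)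
    finally show ?thesis .
  qed
  have "KL (\<lambda>(a,b). marg1 P a * Q b) P = ereal (\<Sum>t\<in>UNIV. ff ((\<lambda>(a,b). marg1 P a * Q b) t) (P t))"
    using nc by (rule KL_fin)
  also have "(\<Sum>t\<in>UNIV. ff ((\<lambda>(a,b). marg1 P a * Q b) t) (P t)) = (\<Sum>b\<in>UNIV. \<Sum>a\<in>UNIV. ff (marg1 P a * Q b) (P (a,b)))"
    by (simp add: sum_UNIV_prod) (rule sum.swap)
  finally show ?thesis using per by simp
qed

lemma umlaut_top: "G = {} \<Longrightarrow> umlaut P = \<infinity>"
  unfolding umlaut_def
proof -
  assume G: "G = {}"
  have "\<infinity> \<le> (INF Q\<in>{Q. is_dist Q}. KL (\<lambda>(a, b). marg1 P a * Q b) P)"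
  proof (rule INF_greatest)
    fix Q :: "'y \<Rightarrow> real" assume "Q \<in> {Q. is_dist Q}"
    hence dQ: "is_dist Q" by simp
    have "\<exists>y. Q y > 0"
    proof (rule ccontr)
      assume a: "\<not> (\<exists>y. Q y > 0)"
      have "sum Q UNIV \<le> 0" using a by (intro sum_nonpos) (simp add: not_less)
      thus False using dQ by (simp add: is_dist_def)
    qed
    then obtain y where "Q y > 0" by blast
    thus "\<infinity> \<le> KL (\<lambda>(a, b). marg1 P a * Q b) P" using KL_inf G by simp
  qed
  thus "(INF Q\<in>{Q. is_dist Q}. KL (\<lambda>(a, b). marg1 P a * Q b) P) = \<infinity>" by (meson order_antisym ereal_less_eq(1))
qed

context
  assumes Gne: "G \<noteq> {}"
begin

definition Z where "Z = (\<Sum>y\<in>UNIV. e y)"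
definition W where "W y = e y / Z" for y

lemma Zpos: "Z > 0"
proof -
  obtain y where y: "y \<in> G" using Gne by blast
  hence "e y > 0" by (simp add: e_def)
  moreover have "e y \<le> Z" unfolding Z_def by (rule member_le_sum) (auto simp: e0)
  ultimately show ?thesis by simp
qed

lemma dW: "is_dist W"
  unfolding is_dist_def W_def using Zpos by (auto simp: e0 sum_divide_distrib[symmetric] Z_def[symmetric])

lemma Wg: "\<forall>y. W y > 0 \<longrightarrow> y \<in> G"
  using Zpos by (auto simp: W_def e_def split: if_splits)

lemma KL_W: "KL (\<lambda>(a,b). marg1 P a * W b) P = ereal (- ln Z)"
proof -
  have "ff (W y) (e y) = W y * ln (1 / Z)" for y
  proof (cases "W y = 0")
    case True thus ?thesis by (simp add: ff_def)
  next
    case False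
    hence "e y \<noteq> 0" by (simp add: W_def)
    thus ?thesis using False Zpos by (simp add: ff_def W_def)
  qed
  hence "(\<Sum>y\<in>UNIV. ff (W y) (e y)) = (\<Sum>y\<in>UNIV. W y) * ln (1/Z)" by (simp add: sum_distrib_right)
  also have "\<dots> = - ln Z" using dW Zpos by (simp add: is_dist_def ln_div)
  finally show ?thesis using KL_eq[OF dW Wg] by simp
qed

lemma KL_lower: "is_dist Q \<Longrightarrow> KL (\<lambda>(a,b). marg1 P a * Q b) P \<ge> ereal (- ln Z)"
proof (cases "\<exists>y. Q y > 0 \<and> y \<notin> G")
  case True thus ?thesis using KL_inf by auto
next
  case False
  assume dQ: "is_dist Q"
  hence g: "\<forall>y. Q y > 0 \<longrightarrow> y \<in> G" using False by auto
  have "(\<Sum>y\<in>UNIV. ff (Q y) (e y)) \<ge> ff (\<Sum>y\<in>UNIV. Q y) (\<Sum>y\<in>UNIV. e y)"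
    using dQ g by (intro log_sum) (auto simp: is_dist_def e0 e_def)
  also have "ff (\<Sum>y\<in>UNIV. Q y) (\<Sum>y\<in>UNIV. e y) = - ln Z"
    using dQ Zpos by (simp add: is_dist_def ff_def Z_def[symmetric] ln_div)
  finally show ?thesis using KL_eq[OF dQ g] by simp
qed

lemma umlaut_val: "umlaut P = ereal (- ln Z)"
proof (rule antisym)
  show "umlaut P \<le> ereal (- ln Z)" unfolding umlaut_def
    by (rule INF_lower2[of W]) (use dW KL_W in auto)
  show "ereal (- ln Z) \<le> umlaut P" unfolding umlaut_def
    by (rule INF_greatest) (simp add: KL_lower)
qed

end

lemma Gcond: "y \<in> G \<longleftrightarrow> (\<forall>x. P (x, y) / marg1 P x > 0 \<or> marg1 P x = 0)"
proof -
  have "(marg1 P x > 0 \<longrightarrow> P (x,y) > 0) \<longleftrightarrow> (P (x, y) / marg1 P x > 0 \<or> marg1 P x = 0)" for x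
    using PX0[of x] P0[of "(x,y)"] by (cases "marg1 P x = 0") (auto simp: zero_less_divide_iff)
  thus ?thesis by (simp add: G_def)
qed

lemma part1a: "0 \<le> umlaut P"
  unfolding umlaut_def by (rule INF_greatest) (simp add: KL_nonneg prod_dist dP)

lemma part2: "umlaut P < \<infinity> \<longleftrightarrow> (\<exists>y. \<forall>x. P (x, y) / marg1 P x > 0 \<or> marg1 P x = 0)"
proof (cases "G = {}")
  case True
  have "\<not> (\<exists>y. \<forall>x. P (x, y) / marg1 P x > 0 \<or> marg1 P x = 0)"
  proof
    assume "\<exists>y. \<forall>x. P (x, y) / marg1 P x > 0 \<or> marg1 P x = 0"
    then obtain y where "\<forall>x. P (x, y) / marg1 P x > 0 \<or> marg1 P x = 0" by blast
    hence "y \<in> G" using Gcond[of y] by simp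
    thus False using True by simp
  qed
  thus ?thesis using umlaut_top[OF True] by simp
next
  case False
  then obtain y where "y \<in> G" by blast
  hence "\<forall>x. P (x, y) / marg1 P x > 0 \<or> marg1 P x = 0" using Gcond[of y] by simp
  hence "\<exists>y. \<forall>x. P (x, y) / marg1 P x > 0 \<or> marg1 P x = 0" by blast
  moreover have "umlaut P < \<infinity>" using umlaut_val[OF False] by simp
  ultimately show ?thesis by simp
qed

end


lemma part1b:
  fixes P :: "'x::finite \<times> 'y::finite \<Rightarrow> real"
  assumes dP: "is_dist P"
  shows "umlaut P = 0 \<longleftrightarrow> (\<forall>x y. P (x, y) = marg1 P x * marg2 P y)"
proof
  assume u: "umlaut P = 0"
  have Gn: "G P \<noteq> {}"
  proof
    assume "G P = {}"
    hence "umlaut P = \<infinity>" by (rule umlaut_top[OF dP])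
    thus False using u by simp
  qed
  have z0: "ereal (- ln (Z P)) = 0"
  proof -
    have "ereal (- ln (Z P)) = umlaut P" by (rule umlaut_val[OF dP Gn, symmetric])
    also have "\<dots> = 0" by (rule u)
    finally show ?thesis .
  qed
  have K0: "KL (\<lambda>(a,b). marg1 P a * W P b) P = 0" using KL_W[OF dP Gn] z0 by simp
  have dPW: "is_dist (\<lambda>(a,b). marg1 P a * W P b)" by (rule prod_dist[OF dP dW[OF dP Gn]])
  have eq: "(\<lambda>(a,b). marg1 P a * W P b) = P" by (rule KL_zero[OF dPW dP K0])
  have pe: "P (x, y) = marg1 P x * W P y" for x y
    using fun_cong[OF eq, of "(x,y)"] by simp
  have m2: "marg2 P y = W P y" for y
    by (simp add: marg2_def pe sum_distrib_right[symmetric] sumPX[OF dP])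
  show "\<forall>x y. P (x, y) = marg1 P x * marg2 P y"
    using pe m2 by simp
next
  assume ind: "\<forall>x y. P (x, y) = marg1 P x * marg2 P y"
  have "(\<Sum>y\<in>UNIV. marg2 P y) = (\<Sum>x\<in>UNIV. marg1 P x)"
    unfolding marg2_def marg1_def by (rule sum.swap)
  hence dm2: "is_dist (marg2 P)" using sumPX[OF dP]
    unfolding is_dist_def by (auto simp: sum_nonneg P0[OF dP] marg2_def)
  have e: "(\<lambda>(a,b). marg1 P a * marg2 P b) = P" using ind by auto
  have "(\<Sum>a\<in>UNIV. if P a = 0 then 0 else P a * ln (P a / P a)) = 0"
    by (rule sum.neutral) simp
  hence KP: "KL P P = 0" by (simp add: KL_def zero_ereal_def)
  have "umlaut P \<le> KL (\<lambda>(a,b). marg1 P a * marg2 P b) P"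
    unfolding umlaut_def by (rule INF_lower) (use dm2 in simp)
  also have "\<dots> = KL P P" by (simp only: e)
  also have "\<dots> = 0" by (rule KP)
  finally have "umlaut P \<le> 0" .
  thus "umlaut P = 0" using part1a[OF dP] by simp
qed


theorem mainTheorem10:
  fixes P :: "'x::finite \<times> 'y::finite \<Rightarrow> real"
    and R :: "'x::finite \<times> 'y::finite \<times> 'z::finite \<Rightarrow> real"
  shows "(is_dist P \<longrightarrow>
            0 \<le> umlaut P \<and>
            (umlaut P = 0 \<longleftrightarrow> (\<forall>x y. P (x, y) = marg1 P x * marg2 P y)) \<and>
            (umlaut P < \<infinity> \<longleftrightarrow>
               (\<exists>y. \<forall>x. P (x, y) / marg1 P x > 0 \<or> marg1 P x = 0)))
       \<and> (is_dist R \<and> markov_chain R \<longrightarrow>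
            umlaut (margXZ R) \<le> umlaut (margXY R) \<and>
            umlaut (margXZ R) \<le> umlaut (margYZ R))"
proof (intro conjI impI)
  assume dP: "is_dist P"
  show "0 \<le> umlaut P" by (rule part1a[OF dP])
  show "umlaut P = 0 \<longleftrightarrow> (\<forall>x y. P (x, y) = marg1 P x * marg2 P y)" by (rule part1b[OF dP])
  show "umlaut P < \<infinity> \<longleftrightarrow> (\<exists>y. \<forall>x. P (x, y) / marg1 P x > 0 \<or> marg1 P x = 0)" by (rule part2[OF dP])
next
  assume h: "is_dist R \<and> markov_chain R"
  show "umlaut (margXZ R) \<le> umlaut (margXY R)" using h by (blast intro: part3a)
  show "umlaut (margXZ R) \<le> umlaut (margYZ R)" using h by (blast intro: part3b)
qed

end
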